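(* For $\sigma>0$ let $\mathcal H_\sigma$ denote the reproducing kernel Hilbert space of the Gaussian kernel $k_\sigma(x,y) = \exp(-\|x-y\|^2/(2\sigma^2))$ on $\mathbb R^d$, with norm $\|\cdot\|_\sigma$. If $f, g \in \mathcal H_\sigma$, then the pointwise product $fg$ satisfies $\|fg\|_{\sigma/\sqrt2} \leq \|f\|_\sigma \|g\|_\sigma$. *)

theory Defs
  imports "HOL-Analysis.Analysis"
begin

text \<open>Gaussian kernel on R^d (index type 'd, d = CARD('d)).\<close>
definition gauss_kernel :: "real \<Rightarrow> real^'d \<Rightarrow> real^'d \<Rightarrow> real" where
  "gauss_kernel \<sigma> x y = exp (- (norm (x - y))\<^sup>2 / (2 * \<sigma>\<^sup>2))"

text \<open>RKHS of a (real, positive definite) kernel k via the Moore--Aronszajn construction.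
  Pre-Hilbert space H0 = span of kernel sections; an element of H0 is given by a finite
  list of (coefficient, centre) pairs.\<close>
definition kfun :: "('a \<Rightarrow> 'a \<Rightarrow> real) \<Rightarrow> (real \<times> 'a) list \<Rightarrow> 'a \<Rightarrow> real" where
  "kfun k xs = (\<lambda>z. \<Sum>(a,x)\<leftarrow>xs. a * k z x)"

definition pre_norm2 :: "('a \<Rightarrow> 'a \<Rightarrow> real) \<Rightarrow> (real \<times> 'a) list \<Rightarrow> real" where
  "pre_norm2 k xs = (\<Sum>(a,x)\<leftarrow>xs. \<Sum>(b,y)\<leftarrow>xs. a * b * k x y)"

definition comb_diff :: "(real \<times> 'a) list \<Rightarrow> (real \<times> 'a) list \<Rightarrow> (real \<times> 'a) list" where
  "comb_diff xs ys = xs @ map (\<lambda>(a,x). (- a, x)) ys"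

definition H0_cauchy :: "('a \<Rightarrow> 'a \<Rightarrow> real) \<Rightarrow> (nat \<Rightarrow> (real \<times> 'a) list) \<Rightarrow> bool" where
  "H0_cauchy k F \<longleftrightarrow> (\<forall>e>0. \<exists>N. \<forall>m\<ge>N. \<forall>n\<ge>N. pre_norm2 k (comb_diff (F m) (F n)) < e)"

definition in_rkhs :: "('a \<Rightarrow> 'a \<Rightarrow> real) \<Rightarrow> ('a \<Rightarrow> real) \<Rightarrow> bool" where
  "in_rkhs k f \<longleftrightarrow> (\<exists>F. H0_cauchy k F \<and> (\<forall>z. (\<lambda>n. kfun k (F n) z) \<longlonglongrightarrow> f z))"

text \<open>Its norm is the limit of the H0 norms of any such sequence (independent of the
  sequence for a positive definite kernel; we take the infimum over all of them).\<close>
definition rkhs_norm :: "('a \<Rightarrow> 'a \<Rightarrow> real) \<Rightarrow> ('a \<Rightarrow> real) \<Rightarrow> real" where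
  "rkhs_norm k f = Inf {L. \<exists>F. H0_cauchy k F \<and> (\<forall>z. (\<lambda>n. kfun k (F n) z) \<longlonglongrightarrow> f z)
                              \<and> (\<lambda>n. sqrt (pre_norm2 k (F n))) \<longlonglongrightarrow> L}"

end

theory Submission
  imports Defs
begin


definition Q :: "('a \<Rightarrow> 'a \<Rightarrow> real) \<Rightarrow> nat \<Rightarrow> (nat \<Rightarrow> real) \<Rightarrow> (nat \<Rightarrow> 'a) \<Rightarrow> real" where
  "Q K n a x = (\<Sum>i<n. \<Sum>j<n. a i * a j * K (x i) (x j))"

definition psd :: "('a \<Rightarrow> 'a \<Rightarrow> real) \<Rightarrow> bool" where
  "psd K \<longleftrightarrow> (\<forall>n a x. 0 \<le> Q K n a x)"

lemma sum_list_nth_map: "(\<Sum>p\<leftarrow>xs. f p) = (\<Sum>i<length xs. f (xs!i))"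
  by (simp add: sum_list_sum_nth atLeast0LessThan)

lemma pre_norm2_Q: "pre_norm2 K xs = Q K (length xs) (\<lambda>i. fst (xs!i)) (\<lambda>i. snd (xs!i))"
  unfolding pre_norm2_def Q_def by (simp add: sum_list_nth_map case_prod_beta)

lemma psd_pre_norm2: "psd K \<Longrightarrow> 0 \<le> pre_norm2 K xs"
  unfolding psd_def pre_norm2_Q by blast

lemma psd_const1: "psd (\<lambda>x y. 1)"
  unfolding psd_def Q_def
proof (intro allI)
  fix n and a :: "nat \<Rightarrow> real" and x :: "nat \<Rightarrow> 'a"
  have "(\<Sum>i<n. \<Sum>j<n. a i * a j * 1) = (\<Sum>i<n. a i) * (\<Sum>i<n. a i)"
    unfolding sum_product by simp
  then show "0 \<le> (\<Sum>i<n. \<Sum>j<n. a i * a j * 1)" by simp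
qed

lemma psd_rescale:
  assumes "psd K" shows "psd (\<lambda>x y. h x * h y * K x y)"
  unfolding psd_def
proof (intro allI)
  fix n a x
  have "Q (\<lambda>x y. h x * h y * K x y) n a x = Q K n (\<lambda>i. a i * h (x i)) x"
    unfolding Q_def by (simp add: algebra_simps)
  then show "0 \<le> Q (\<lambda>x y. h x * h y * K x y) n a x" using assms unfolding psd_def by simp
qed

lemma psd_sum:
  assumes "finite S" "\<And>s. s \<in> S \<Longrightarrow> psd (K s)"
  shows "psd (\<lambda>x y. \<Sum>s\<in>S. K s x y)"
  unfolding psd_def
proof (intro allI)
  fix n a x
  have "Q (\<lambda>x y. \<Sum>s\<in>S. K s x y) n a x = (\<Sum>s\<in>S. Q (K s) n a x)"
    unfolding Q_def by (simp add: sum_distrib_left sum.swap[of _ S])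
  also have "\<dots> \<ge> 0" using assms unfolding psd_def by (simp add: sum_nonneg)
  finally show "0 \<le> Q (\<lambda>x y. \<Sum>s\<in>S. K s x y) n a x" .
qed

lemma psd_scale:
  assumes "c \<ge> 0" "psd K" shows "psd (\<lambda>x y. c * K x y)"
  unfolding psd_def
proof (intro allI)
  fix n a x
  have "Q (\<lambda>x y. c * K x y) n a x = c * Q K n a x"
    unfolding Q_def by (simp add: sum_distrib_left algebra_simps)
  then show "0 \<le> Q (\<lambda>x y. c * K x y) n a x" using assms unfolding psd_def by simp
qed

lemma psd_feat_mult:
  assumes "psd K" "finite T"
  shows "psd (\<lambda>x y. K x y * (\<Sum>t\<in>T. \<phi> t x * \<phi> t y))"
  unfolding psd_def
proof (intro allI)
  fix n a x
  have "Q (\<lambda>x y. K x y * (\<Sum>t\<in>T. \<phi> t x * \<phi> t y)) n a x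
      = (\<Sum>t\<in>T. Q K n (\<lambda>i. a i * \<phi> t (x i)) x)"
    unfolding Q_def by (simp add: sum_distrib_left sum.swap[of _ T] algebra_simps)
  also have "\<dots> \<ge> 0" using assms unfolding psd_def by (simp add: sum_nonneg)
  finally show "0 \<le> Q (\<lambda>x y. K x y * (\<Sum>t\<in>T. \<phi> t x * \<phi> t y)) n a x" .
qed

lemma psd_feat_pow:
  assumes "psd K" "finite T"
  shows "psd (\<lambda>x y. K x y * (\<Sum>t\<in>T. \<phi> t x * \<phi> t y) ^ j)"
proof (induction j)
  case 0 then show ?case using assms by simp
next
  case (Suc j)
  from psd_feat_mult[OF Suc assms(2), of \<phi>] show ?case by (simp add: algebra_simps)
qed

lemma psd_limit:
  assumes "\<And>N. psd (K N)" "\<And>x y. (\<lambda>N. K N x y) \<longlonglongrightarrow> K' x y"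
  shows "psd K'"
  unfolding psd_def
proof (intro allI)
  fix n a x
  have "(\<lambda>N. Q (K N) n a x) \<longlonglongrightarrow> Q K' n a x"
    unfolding Q_def by (intro tendsto_intros assms)
  moreover have "\<forall>N. 0 \<le> Q (K N) n a x" using assms unfolding psd_def by blast
  ultimately show "0 \<le> Q K' n a x" by (intro LIMSEQ_le_const) auto
qed


lemma exp_partial: "(\<lambda>N. \<Sum>j<N. z ^ j / fact j) \<longlonglongrightarrow> exp (z::real)"
  using exp_converges[of z] by (simp add: sums_def divide_inverse mult.commute)

lemma exp1_partial: "(\<lambda>N. \<Sum>j<N. z ^ Suc j / fact (Suc j)) \<longlonglongrightarrow> exp (z::real) - 1"
proof -
  have "(\<lambda>n. z ^ n / fact n) sums exp z"
    using exp_converges[of z] by (simp add: divide_inverse mult.commute)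
  then have "(\<lambda>n. z ^ Suc n / fact (Suc n)) sums (exp z - 1)"
    using sums_Suc_iff[of "\<lambda>n. z ^ n / fact n"] by simp
  then show ?thesis by (simp add: sums_def)
qed

lemma psd_exp_feat:
  assumes "finite T"
  shows "psd (\<lambda>x y. exp (\<Sum>t\<in>T. \<phi> t x * \<phi> t y))"
proof (rule psd_limit)
  fix N
  show "psd (\<lambda>x y. \<Sum>j<N. (1 / fact j) * (1 * (\<Sum>t\<in>T. \<phi> t x * \<phi> t y) ^ j))"
    by (intro psd_sum psd_scale psd_feat_pow psd_const1 assms) auto
next
  fix x y
  show "(\<lambda>N. \<Sum>j<N. (1 / fact j) * (1 * (\<Sum>t\<in>T. \<phi> t x * \<phi> t y) ^ j))
      \<longlonglongrightarrow> exp (\<Sum>t\<in>T. \<phi> t x * \<phi> t y)"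
    using exp_partial by simp
qed

lemma psd_expexp:
  assumes "finite T" "finite U"
  shows "psd (\<lambda>x y. exp (\<Sum>t\<in>T. \<phi> t x * \<phi> t y) * (exp (\<Sum>u\<in>U. \<psi> u x * \<psi> u y) - 1))"
proof (rule psd_limit)
  fix N
  show "psd (\<lambda>x y. \<Sum>j<N. \<Sum>k<N. (1 / fact j * (1 / fact (Suc k))) *
     ((1 * (\<Sum>t\<in>T. \<phi> t x * \<phi> t y) ^ j) * (\<Sum>u\<in>U. \<psi> u x * \<psi> u y) ^ Suc k))"
    by (intro psd_sum psd_scale psd_feat_pow psd_const1 assms) auto
next
  fix x y
  let ?A = "\<Sum>t\<in>T. \<phi> t x * \<phi> t y" and ?B = "\<Sum>u\<in>U. \<psi> u x * \<psi> u y"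
  have "(\<lambda>N. (\<Sum>j<N. ?A ^ j / fact j) * (\<Sum>k<N. ?B ^ Suc k / fact (Suc k)))
      \<longlonglongrightarrow> exp ?A * (exp ?B - 1)"
    by (intro tendsto_mult exp_partial exp1_partial)
  moreover have "(\<Sum>j<N. ?A ^ j / fact j) * (\<Sum>k<N. ?B ^ Suc k / fact (Suc k)) =
     (\<Sum>j<N. \<Sum>k<N. (1 / fact j * (1 / fact (Suc k))) * ((1 * ?A ^ j) * ?B ^ Suc k))" for N
    unfolding sum_product by (intro sum.cong refl) (simp add: field_simps)
  ultimately show "(\<lambda>N. \<Sum>j<N. \<Sum>k<N. (1 / fact j * (1 / fact (Suc k))) *
     ((1 * ?A ^ j) * ?B ^ Suc k)) \<longlonglongrightarrow> exp ?A * (exp ?B - 1)" by simp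
qed



lemma nsq: "(norm (x - y))\<^sup>2 = (norm x)\<^sup>2 - 2 * inner x y + (norm (y::real^'d))\<^sup>2"
  by (simp add: power2_norm_eq_inner inner_diff_left inner_diff_right inner_commute)

lemma id1: "4 * (norm (z - (1/2) *\<^sub>R (x + y)))\<^sup>2 + (norm (x - y))\<^sup>2
   = 2 * (norm (z - x))\<^sup>2 + 2 * (norm (z - (y::real^'d)))\<^sup>2"
  by (simp add: power2_norm_eq_inner inner_diff_left inner_diff_right inner_add_left inner_add_right inner_commute algebra_simps)

lemma id2: "2 * (norm (x - x'))\<^sup>2 + 2 * (norm (y - (y'::real^'d)))\<^sup>2 =
   (norm (x - y))\<^sup>2 + (norm (x' - y'))\<^sup>2 + 4 * (norm ((1/2) *\<^sub>R (x + y) - (1/2) *\<^sub>R (x' + y')))\<^sup>2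
   - 2 * inner (x - y) (x' - y')"
  by (simp add: power2_norm_eq_inner inner_diff_left inner_diff_right inner_add_left inner_add_right inner_commute algebra_simps)

lemma inner_feat: "inner x y / c = (\<Sum>i\<in>UNIV. (x$i / sqrt c) * (y$i / sqrt c))" if "c > 0" for x y :: "real^'d"
  using that by (simp add: inner_vec_def sum_divide_distrib)

definition wt :: "real \<Rightarrow> ((real^'d) \<times> (real^'d)) \<Rightarrow> real" where
  "wt \<sigma> t = exp (- (norm (fst t - snd t))\<^sup>2 / (4 * \<sigma>\<^sup>2))"
definition mt :: "((real^'d) \<times> (real^'d)) \<Rightarrow> real^'d" where
  "mt t = (1/2) *\<^sub>R (fst t + snd t)"

lemma sig2: "(\<sigma> / sqrt 2)\<^sup>2 = \<sigma>\<^sup>2 / 2"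
  by (simp add: power_divide)

lemma real1: "4 * B + A = 2 * C + 2 * D \<Longrightarrow> (s::real) > 0 \<Longrightarrow>
  - C / (2 * s\<^sup>2) + - D / (2 * s\<^sup>2) = - A / (4 * s\<^sup>2) + - B / (2 * (s\<^sup>2 / 2))"
proof -
  assume h: "4 * B + A = 2 * C + 2 * D" "s > 0"
  have a: "A = 2 * C + 2 * D - 4 * B" using h by linarith
  show ?thesis using h(2) unfolding a by (simp add: field_simps)
qed

lemma real2: "2 * C + 2 * D = A + A' + 4 * B - 2 * I \<Longrightarrow> (s::real) > 0 \<Longrightarrow>
  - C / (2 * s\<^sup>2) + - D / (2 * s\<^sup>2) = - A / (4 * s\<^sup>2) + - A' / (4 * s\<^sup>2) + - B / (2 * (s\<^sup>2 / 2)) + I / (2 * s\<^sup>2)"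
proof -
  assume h: "2 * C + 2 * D = A + A' + 4 * B - 2 * I" "s > 0"
  have a: "A = 2 * C + 2 * D - 4 * B - A' + 2 * I" using h by linarith
  show ?thesis using h(2) unfolding a by (simp add: field_simps)
qed

lemma G1:
  assumes "\<sigma> > 0"
  shows "gauss_kernel \<sigma> z x * gauss_kernel \<sigma> z y = wt \<sigma> (x,y) * gauss_kernel (\<sigma> / sqrt 2) z (mt (x,y))"
proof -
  have e: "- (norm (z - x))\<^sup>2 / (2 * \<sigma>\<^sup>2) + - (norm (z - y))\<^sup>2 / (2 * \<sigma>\<^sup>2) =
     - (norm (x - y))\<^sup>2 / (4 * \<sigma>\<^sup>2) + - (norm (z - (1/2) *\<^sub>R (x + y)))\<^sup>2 / (2 * (\<sigma>\<^sup>2 / 2))"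
    by (rule real1[OF id1[of z x y] assms])
  show ?thesis unfolding gauss_kernel_def wt_def mt_def sig2 fst_conv snd_conv
    by (simp only: mult_exp_exp e)
qed

lemma G2:
  assumes "\<sigma> > 0"
  shows "gauss_kernel \<sigma> x x' * gauss_kernel \<sigma> y y' =
    wt \<sigma> (x,y) * wt \<sigma> (x',y') * gauss_kernel (\<sigma> / sqrt 2) (mt (x,y)) (mt (x',y'))
     * exp (inner (x - y) (x' - y') / (2 * \<sigma>\<^sup>2))"
proof -
  have e: "- (norm (x - x'))\<^sup>2 / (2 * \<sigma>\<^sup>2) + - (norm (y - y'))\<^sup>2 / (2 * \<sigma>\<^sup>2) =
     - (norm (x - y))\<^sup>2 / (4 * \<sigma>\<^sup>2) + - (norm (x' - y'))\<^sup>2 / (4 * \<sigma>\<^sup>2) +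
     - (norm ((1/2) *\<^sub>R (x + y) - (1/2) *\<^sub>R (x' + y')))\<^sup>2 / (2 * (\<sigma>\<^sup>2 / 2))
     + inner (x - y) (x' - y') / (2 * \<sigma>\<^sup>2)"
    by (rule real2[OF id2[of x x' y y'] assms])
  show ?thesis unfolding gauss_kernel_def wt_def mt_def sig2 fst_conv snd_conv
    by (simp only: mult_exp_exp e)
qed

lemma G3:
  assumes "c > 0"
  shows "exp (- (norm (u - v))\<^sup>2 / (2 * c)) =
    exp (- (norm u)\<^sup>2 / (2*c)) * exp (- (norm v)\<^sup>2 / (2*c)) *
    exp (\<Sum>i\<in>UNIV. (u$i / sqrt c) * (v$i / sqrt c))"
proof -
  have e: "- (norm (u - v))\<^sup>2 / (2 * c) = - (norm u)\<^sup>2 / (2*c) + - (norm v)\<^sup>2 / (2*c) + inner u v / c"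
    using assms nsq[of u v] by (simp add: field_simps)
  show ?thesis unfolding e inner_feat[OF assms] by (simp add: exp_add[symmetric])
qed



definition B :: "('a \<Rightarrow> 'a \<Rightarrow> real) \<Rightarrow> (real \<times> 'a) list \<Rightarrow> (real \<times> 'a) list \<Rightarrow> real" where
  "B K xs ys = (\<Sum>(a,x)\<leftarrow>xs. \<Sum>(b,y)\<leftarrow>ys. a * b * K x y)"

definition scl :: "real \<Rightarrow> (real \<times> 'a) list \<Rightarrow> (real \<times> 'a) list" where
  "scl c xs = map (\<lambda>(a,x). (c * a, x)) xs"

lemma pre_norm2_B: "pre_norm2 K xs = B K xs xs"
  by (simp add: pre_norm2_def B_def)

lemma B_app1: "B K (xs @ ys) zs = B K xs zs + B K ys zs"
  by (simp add: B_def)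

lemma sum_list_map_add: "(\<Sum>p\<leftarrow>xs. f p + g p) = (\<Sum>p\<leftarrow>xs. f p) + (\<Sum>p\<leftarrow>(xs::'b list). (g p :: real))"
  by (induction xs) auto

lemma sum_list_map_cmult: "(\<Sum>p\<leftarrow>xs. c * f p) = c * (\<Sum>p\<leftarrow>(xs::'b list). (f p :: real))"
  by (induction xs) (auto simp: algebra_simps)

lemma sum_list_swap: "(\<Sum>p\<leftarrow>xs. \<Sum>q\<leftarrow>ys. f p q) = (\<Sum>q\<leftarrow>ys. \<Sum>p\<leftarrow>xs. (f p q :: real))"
  by (induction xs) (auto simp: sum_list_map_add)

lemma B_app2: "B K zs (xs @ ys) = B K zs xs + B K zs ys"
  unfolding B_def case_prod_unfold by (simp add: sum_list_map_add)

lemma B_scl1: "B K (scl c xs) ys = c * B K xs ys"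
  unfolding B_def scl_def case_prod_unfold by (simp add: sum_list_map_cmult[symmetric] comp_def algebra_simps)

lemma B_scl2: "B K xs (scl c ys) = c * B K xs ys"
  unfolding B_def scl_def case_prod_unfold by (simp add: sum_list_map_cmult[symmetric] comp_def algebra_simps)

lemma neg_scl: "map (\<lambda>(a,x). (- a, x)) xs = scl (-1) xs"
  by (simp add: scl_def case_prod_beta)

lemma B_sym: "(\<And>x y. K x y = K y x) \<Longrightarrow> B K xs ys = B K ys xs"
  unfolding B_def case_prod_beta by (subst sum_list_swap) (simp add: algebra_simps)

lemma pre_norm2_diff:
  "pre_norm2 K (comb_diff xs ys) = B K xs xs - B K xs ys - B K ys xs + B K ys ys"
  by (simp add: pre_norm2_B comb_diff_def neg_scl B_app1 B_app2 B_scl1 B_scl2)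

lemma discr:
  fixes a b c :: real
  assumes "\<And>t. 0 \<le> a + 2 * b * t + c * t\<^sup>2" "c \<ge> 0"
  shows "b\<^sup>2 \<le> a * c"
proof (cases "c = 0")
  case True
  show ?thesis
  proof (rule ccontr)
    assume "\<not> ?thesis"
    then have "b \<noteq> 0" using True by auto
    have "0 \<le> a + 2 * b * (- (a + 1) / (2 * b))" using assms(1)[of "- (a + 1) / (2 * b)"] True by simp
    also have "\<dots> = -1" using \<open>b \<noteq> 0\<close> by (simp add: field_simps)
    finally show False by simp
  qed
next
  case False
  then have c: "c > 0" using assms(2) by simp
  have "0 \<le> a + 2 * b * (- b / c) + c * (- b / c)\<^sup>2" using assms(1) by blast
  also have "\<dots> = (a * c - b\<^sup>2) / c" using c by (simp add: field_simps power2_eq_square)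
  finally show ?thesis using c by (simp add: divide_nonneg_pos zero_le_divide_iff)
qed

lemma CS:
  assumes "psd K" "\<And>x y. K x y = K y x"
  shows "(B K xs ys)\<^sup>2 \<le> B K xs xs * B K ys ys"
proof -
  have "0 \<le> B K xs xs + 2 * B K xs ys * t + B K ys ys * t\<^sup>2" for t
  proof -
    have "0 \<le> pre_norm2 K (xs @ scl t ys)" by (rule psd_pre_norm2[OF assms(1)])
    also have "\<dots> = B K xs xs + 2 * B K xs ys * t + B K ys ys * t\<^sup>2"
      using B_sym[of K xs ys, OF assms(2)]
      by (simp add: pre_norm2_B B_app1 B_app2 B_scl1 B_scl2 power2_eq_square algebra_simps)
    finally show ?thesis .
  qed
  moreover have "0 \<le> B K ys ys" using psd_pre_norm2[OF assms(1)] by (simp add: pre_norm2_B)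
  ultimately show ?thesis by (rule discr)
qed

lemma sqrt_tri:
  fixes a b c :: real
  assumes "0 \<le> a" "0 \<le> b" "c\<^sup>2 \<le> a * b"
  shows "\<bar>sqrt a - sqrt b\<bar> \<le> sqrt (a - 2 * c + b)"
proof -
  have "\<bar>c\<bar> \<le> sqrt (a * b)" using assms real_le_rsqrt by (metis abs_le_square_iff real_sqrt_abs real_sqrt_le_iff)
  then have "c \<le> sqrt a * sqrt b" by (simp add: real_sqrt_mult)
  then have "(sqrt a - sqrt b)\<^sup>2 \<le> a - 2 * c + b"
    using assms by (simp add: power2_diff)
  then have "sqrt ((sqrt a - sqrt b)\<^sup>2) \<le> sqrt (a - 2 * c + b)" by (rule real_sqrt_le_mono)
  then show ?thesis by simp
qed

lemma norm_conv:
  assumes "psd K" "\<And>x y. K x y = K y x" "H0_cauchy K F"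
  shows "\<exists>L. (\<lambda>n. sqrt (pre_norm2 K (F n))) \<longlonglongrightarrow> L"
proof -
  have "Cauchy (\<lambda>n. sqrt (pre_norm2 K (F n)))"
    unfolding Cauchy_def
  proof (intro allI impI)
    fix e :: real assume e: "e > 0"
    then obtain N where N: "\<forall>m\<ge>N. \<forall>n\<ge>N. pre_norm2 K (comb_diff (F m) (F n)) < e\<^sup>2"
      using assms(3) unfolding H0_cauchy_def by (meson zero_less_power)
    show "\<exists>M. \<forall>m\<ge>M. \<forall>n\<ge>M. dist (sqrt (pre_norm2 K (F m))) (sqrt (pre_norm2 K (F n))) < e"
    proof (intro exI allI impI)
      fix m n assume mn: "N \<le> m" "N \<le> n"
      have "\<bar>sqrt (B K (F m) (F m)) - sqrt (B K (F n) (F n))\<bar>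
          \<le> sqrt (B K (F m) (F m) - 2 * B K (F m) (F n) + B K (F n) (F n))"
        using psd_pre_norm2[OF assms(1)] CS[OF assms(1,2)]
        by (intro sqrt_tri) (auto simp: pre_norm2_B)
      also have "\<dots> = sqrt (pre_norm2 K (comb_diff (F m) (F n)))"
        using B_sym[of K "F m" "F n", OF assms(2)] by (simp add: pre_norm2_diff)
      also have "\<dots> < sqrt (e\<^sup>2)" using N mn by (intro real_sqrt_less_mono) simp
      also have "\<dots> = e" using e by simp
      finally show "dist (sqrt (pre_norm2 K (F m))) (sqrt (pre_norm2 K (F n))) < e"
        by (simp add: dist_real_def pre_norm2_B)
    qed
  qed
  then show ?thesis using Cauchy_convergent_iff convergent_def by blast
qed



definition tens :: "(real \<times> 'a) list \<Rightarrow> (real \<times> 'a) list \<Rightarrow> (real \<times> ('a \<times> 'a)) list" where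
  "tens F G = concat (map (\<lambda>(a,x). map (\<lambda>(b,y). (a * b, (x, y))) G) F)"

definition Kt :: "('a \<Rightarrow> 'a \<Rightarrow> real) \<Rightarrow> ('a \<times> 'a) \<Rightarrow> ('a \<times> 'a) \<Rightarrow> real" where
  "Kt K t t' = K (fst t) (fst t') * K (snd t) (snd t')"

lemma sum_tens: "(\<Sum>p\<leftarrow>tens F G. h p) = (\<Sum>(a,x)\<leftarrow>F. \<Sum>(b,y)\<leftarrow>G. (h (a * b, (x, y)) :: real))"
  by (induction F) (auto simp: tens_def case_prod_unfold comp_def)

lemma B_tens: "B (Kt K) (tens F G) (tens F' G') = B K F F' * B K G G'"
proof -
  have "B (Kt K) (tens F G) (tens F' G') =
    (\<Sum>p\<leftarrow>F. \<Sum>q\<leftarrow>G. \<Sum>p'\<leftarrow>F'. \<Sum>q'\<leftarrow>G'. fst p * fst q * (fst p' * fst q') * (K (snd p) (snd p') * K (snd q) (snd q')))"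
    unfolding B_def by (simp add: sum_tens case_prod_unfold Kt_def)
  also have "\<dots> = (\<Sum>p\<leftarrow>F. \<Sum>p'\<leftarrow>F'. \<Sum>q\<leftarrow>G. \<Sum>q'\<leftarrow>G'. (fst p * fst p' * K (snd p) (snd p')) * (fst q * fst q' * K (snd q) (snd q')))"
    by (subst sum_list_swap) (simp add: algebra_simps)
  also have "\<dots> = B K F F' * B K G G'"
    unfolding B_def case_prod_unfold
    apply (simp only: sum_list_mult_const[symmetric])
    apply (simp only: sum_list_const_mult[symmetric])
    done
  finally show ?thesis .
qed


definition diag :: "real \<Rightarrow> (real \<times> ((real^'d) \<times> (real^'d))) list \<Rightarrow> (real \<times> (real^'d)) list" where
  "diag \<sigma> T = map (\<lambda>(c,t). (c * wt \<sigma> t, mt t)) T"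

lemma kfun_diag:
  assumes "\<sigma> > 0"
  shows "kfun (gauss_kernel (\<sigma> / sqrt 2)) (diag \<sigma> (tens F G)) z =
    kfun (gauss_kernel \<sigma>) F z * kfun (gauss_kernel \<sigma>) G z"
proof -
  have "kfun (gauss_kernel (\<sigma> / sqrt 2)) (diag \<sigma> (tens F G)) z =
     (\<Sum>p\<leftarrow>F. \<Sum>q\<leftarrow>G. fst p * fst q * (wt \<sigma> (snd p, snd q) * gauss_kernel (\<sigma> / sqrt 2) z (mt (snd p, snd q))))"
    unfolding kfun_def diag_def by (simp add: sum_tens case_prod_unfold comp_def mult.assoc)
  also have "\<dots> = (\<Sum>p\<leftarrow>F. \<Sum>q\<leftarrow>G. (fst p * gauss_kernel \<sigma> z (snd p)) * (fst q * gauss_kernel \<sigma> z (snd q)))"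
    by (simp add: G1[OF assms, symmetric] algebra_simps)
  also have "\<dots> = kfun (gauss_kernel \<sigma>) F z * kfun (gauss_kernel \<sigma>) G z"
    unfolding kfun_def case_prod_unfold
    apply (simp only: sum_list_mult_const[symmetric])
    apply (simp only: sum_list_const_mult[symmetric])
    done
  finally show ?thesis .
qed

lemma comb_diff_diag: "comb_diff (diag \<sigma> T) (diag \<sigma> T') = diag \<sigma> (comb_diff T T')"
  by (simp add: comb_diff_def diag_def case_prod_unfold comp_def)

lemma pre_norm2_map: "pre_norm2 K (map (\<lambda>(c,t). (c * w t, m t)) T) = pre_norm2 (\<lambda>t t'. w t * w t' * K (m t) (m t')) T"
  unfolding pre_norm2_def case_prod_unfold by (simp add: comp_def algebra_simps)

lemma pre_norm2_diffK: "pre_norm2 (\<lambda>x y. K1 x y - K2 x y) T = pre_norm2 K1 T - pre_norm2 K2 T"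
  unfolding pre_norm2_Q Q_def by (simp add: right_diff_distrib sum_subtractf)

lemma Kdiff_eq:
  assumes "\<sigma> > 0"
  defines "c \<equiv> (\<sigma> / sqrt 2)\<^sup>2"
  shows "Kt (gauss_kernel \<sigma>) t t' - wt \<sigma> t * wt \<sigma> t' * gauss_kernel (\<sigma> / sqrt 2) (mt t) (mt t') =
    (wt \<sigma> t * exp (- (norm (mt t))\<^sup>2 / (2*c))) * (wt \<sigma> t' * exp (- (norm (mt t'))\<^sup>2 / (2*c))) *
    (exp (\<Sum>i\<in>UNIV. ((mt t)$i / sqrt c) * ((mt t')$i / sqrt c)) *
     (exp (\<Sum>i\<in>UNIV. ((fst t - snd t)$i / sqrt (2 * \<sigma>\<^sup>2)) * ((fst t' - snd t')$i / sqrt (2 * \<sigma>\<^sup>2))) - 1))"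
proof -
  have c: "c > 0" unfolding c_def using assms by simp
  obtain x y x' y' where t: "t = (x,y)" "t' = (x',y')" by (cases t, cases t') auto
  have k': "gauss_kernel (\<sigma> / sqrt 2) (mt t) (mt t') = exp (- (norm (mt t))\<^sup>2 / (2*c)) * exp (- (norm (mt t'))\<^sup>2 / (2*c)) *
    exp (\<Sum>i\<in>UNIV. ((mt t)$i / sqrt c) * ((mt t')$i / sqrt c))"
    unfolding gauss_kernel_def c_def[symmetric] by (rule G3[OF c])
  have E: "inner (x - y) (x' - y') / (2 * \<sigma>\<^sup>2) = (\<Sum>i\<in>UNIV. ((x - y)$i / sqrt (2 * \<sigma>\<^sup>2)) * ((x' - y')$i / sqrt (2 * \<sigma>\<^sup>2)))"
    using assms by (intro inner_feat) simp
  have r: "\<And>a b p q X Y :: real. a * b * (p * q * X) * exp Y - a * b * (p * q * X) = (a * p) * (b * q) * (X * (exp Y - 1))"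
    by (simp add: algebra_simps)
  show ?thesis
    unfolding Kt_def t fst_conv snd_conv G2[OF assms(1)] k'[unfolded t] E
    by (rule r)
qed

lemma diag_le:
  assumes "\<sigma> > 0"
  shows "pre_norm2 (gauss_kernel (\<sigma> / sqrt 2)) (diag \<sigma> T) \<le> pre_norm2 (Kt (gauss_kernel \<sigma>)) T"
proof -
  define c where "c = (\<sigma> / sqrt 2)\<^sup>2"
  let ?Kw = "\<lambda>t t'. wt \<sigma> t * wt \<sigma> t' * gauss_kernel (\<sigma> / sqrt 2) (mt t) (mt t')"
  have "psd (\<lambda>t t'. (wt \<sigma> t * exp (- (norm (mt t))\<^sup>2 / (2*c))) * (wt \<sigma> t' * exp (- (norm (mt t'))\<^sup>2 / (2*c))) *
    (exp (\<Sum>i\<in>UNIV. ((mt t)$i / sqrt c) * ((mt t')$i / sqrt c)) *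
     (exp (\<Sum>i\<in>UNIV. ((fst t - snd t)$i / sqrt (2 * \<sigma>\<^sup>2)) * ((fst t' - snd t')$i / sqrt (2 * \<sigma>\<^sup>2))) - 1)))"
    by (intro psd_rescale psd_expexp) auto
  moreover have eq: "\<And>t t'. Kt (gauss_kernel \<sigma>) t t' - ?Kw t t' = (wt \<sigma> t * exp (- (norm (mt t))\<^sup>2 / (2*c))) * (wt \<sigma> t' * exp (- (norm (mt t'))\<^sup>2 / (2*c))) *
    (exp (\<Sum>i\<in>UNIV. ((mt t)$i / sqrt c) * ((mt t')$i / sqrt c)) *
     (exp (\<Sum>i\<in>UNIV. ((fst t - snd t)$i / sqrt (2 * \<sigma>\<^sup>2)) * ((fst t' - snd t')$i / sqrt (2 * \<sigma>\<^sup>2))) - 1))"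
    unfolding c_def by (rule Kdiff_eq[OF assms])
  ultimately have "psd (\<lambda>t t'. Kt (gauss_kernel \<sigma>) t t' - ?Kw t t')"
    by (simp only: eq)
  then have "0 \<le> pre_norm2 (\<lambda>t t'. Kt (gauss_kernel \<sigma>) t t' - ?Kw t t') T" by (rule psd_pre_norm2)
  then show ?thesis unfolding pre_norm2_diffK diag_def pre_norm2_map by simp
qed



lemma gauss_sym: "gauss_kernel s x y = gauss_kernel s y x"
  unfolding gauss_kernel_def by (simp add: norm_minus_commute)

lemma psd_gauss:
  assumes "s > 0" shows "psd (gauss_kernel s)"
proof -
  have c: "s\<^sup>2 > 0" using assms by simp
  have eq: "gauss_kernel s = (\<lambda>x y. exp (- (norm x)\<^sup>2 / (2 * s\<^sup>2)) * exp (- (norm y)\<^sup>2 / (2 * s\<^sup>2)) *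
    exp (\<Sum>i\<in>UNIV. (x$i / sqrt (s\<^sup>2)) * (y$i / sqrt (s\<^sup>2))))"
    unfolding gauss_kernel_def by (intro ext G3[OF c])
  show ?thesis unfolding eq by (intro psd_rescale psd_exp_feat) auto
qed

lemma B_diff1: "B K (comb_diff xs ys) zs = B K xs zs - B K ys zs"
  by (simp add: comb_diff_def neg_scl B_app1 B_scl1)

lemma B_diff2: "B K zs (comb_diff xs ys) = B K zs xs - B K zs ys"
  by (simp add: comb_diff_def neg_scl B_app2 B_scl2)

lemma E_real:
  fixes a d dp dq u v M \<delta> :: real
  assumes "0 \<le> a" "a \<le> M" "0 \<le> d" "d \<le> M" "0 \<le> dp" "dp \<le> \<delta>" "0 \<le> dq" "dq \<le> \<delta>"
    "u\<^sup>2 \<le> a * dp" "v\<^sup>2 \<le> dq * d"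
  shows "a * dq + dp * d + 2 * (u * v) \<le> 4 * M * \<delta>"
proof -
  have M: "0 \<le> M" "0 \<le> \<delta>" using assms by linarith+
  have 1: "a * dq \<le> M * \<delta>" using assms by (intro mult_mono) auto
  have 2: "dp * d \<le> \<delta> * M" using assms by (intro mult_mono) auto
  have "(u * v)\<^sup>2 = u\<^sup>2 * v\<^sup>2" by (simp add: power_mult_distrib)
  also have "\<dots> \<le> (a * dp) * (dq * d)" using assms by (intro mult_mono) auto
  also have "\<dots> = (a * d) * (dp * dq)" by simp
  also have "\<dots> \<le> (M * M) * (\<delta> * \<delta>)" using assms M by (intro mult_mono) auto
  also have "\<dots> = (M * \<delta>)\<^sup>2" by (simp add: power2_eq_square)
  finally have "\<bar>u * v\<bar> \<le> M * \<delta>" using power2_le_iff_abs_le[of "M * \<delta>" "u * v"] M by simp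
  then show ?thesis using 1 2 by (simp add: algebra_simps)
qed


lemma bounded_pn:
  assumes "(\<lambda>n. sqrt (pre_norm2 K (F n))) \<longlonglongrightarrow> L"
  shows "\<exists>M. \<forall>n. pre_norm2 K (F n) \<le> M"
proof -
  obtain M where M: "\<forall>n. norm (sqrt (pre_norm2 K (F n))) \<le> M"
    using convergent_imp_Bseq[OF convergentI[OF assms]] unfolding Bseq_def by blast
  have "pre_norm2 K (F n) \<le> M\<^sup>2" for n
  proof -
    have "\<bar>sqrt (pre_norm2 K (F n))\<bar> \<le> M" using M by simp
    then have "(sqrt (pre_norm2 K (F n)))\<^sup>2 \<le> M\<^sup>2" by (metis abs_le_square_iff abs_ge_self order_trans power2_abs abs_le_self_iff)
    then show ?thesis by (smt (verit) real_sqrt_pow2 sqrt_le_D)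
  qed
  then show ?thesis by blast
qed

lemma prod_seq:
  assumes s: "\<sigma> > 0"
    and cF: "H0_cauchy (gauss_kernel \<sigma>) F" and cG: "H0_cauchy (gauss_kernel \<sigma>) G"
    and lF: "(\<lambda>n. sqrt (pre_norm2 (gauss_kernel \<sigma>) (F n))) \<longlonglongrightarrow> Lf"
    and lG: "(\<lambda>n. sqrt (pre_norm2 (gauss_kernel \<sigma>) (G n))) \<longlonglongrightarrow> Lg"
  shows "H0_cauchy (gauss_kernel (\<sigma> / sqrt 2)) (\<lambda>n. diag \<sigma> (tens (F n) (G n)))
    \<and> (\<exists>L. (\<lambda>n. sqrt (pre_norm2 (gauss_kernel (\<sigma> / sqrt 2)) (diag \<sigma> (tens (F n) (G n))))) \<longlonglongrightarrow> L \<and> L \<le> Lf * Lg)"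
proof -
  let ?k = "gauss_kernel \<sigma>" and ?k' = "gauss_kernel (\<sigma> / sqrt 2)"
  let ?H = "\<lambda>n. diag \<sigma> (tens (F n) (G n))"
  define P where "P m n = B ?k (F m) (F n)" for m n
  define Q where "Q m n = B ?k (G m) (G n)" for m n
  have psk: "psd ?k" by (rule psd_gauss[OF s])
  have psk': "psd ?k'" by (rule psd_gauss) (use s in simp)
  have symk: "\<And>x y. ?k x y = ?k y x" by (rule gauss_sym)
  have symk': "\<And>x y. ?k' x y = ?k' y x" by (rule gauss_sym)
  have Psym: "P m n = P n m" for m n unfolding P_def by (rule B_sym[OF symk])
  have Qsym: "Q m n = Q n m" for m n unfolding Q_def by (rule B_sym[OF symk])
  obtain Mf where Mf: "\<forall>n. P n n \<le> Mf" using bounded_pn[OF lF] unfolding P_def pre_norm2_B by blast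
  obtain Mg where Mg: "\<forall>n. Q n n \<le> Mg" using bounded_pn[OF lG] unfolding Q_def pre_norm2_B by blast
  define M where "M = max (max Mf Mg) 0"
  have M0: "M \<ge> 0" unfolding M_def by simp
  have Pnn: "0 \<le> P n n" "P n n \<le> M" for n
    using psd_pre_norm2[OF psk, of "F n"] Mf unfolding P_def pre_norm2_B M_def by (auto intro: order_trans)
  have Qnn: "0 \<le> Q n n" "Q n n \<le> M" for n
    using psd_pre_norm2[OF psk, of "G n"] Mg unfolding Q_def pre_norm2_B M_def by (auto intro: order_trans)
  have dP: "pre_norm2 ?k (comb_diff (F m) (F n)) = P m m - 2 * P m n + P n n" for m n
    using Psym[of m n] unfolding pre_norm2_diff P_def by simp
  have dQ: "pre_norm2 ?k (comb_diff (G m) (G n)) = Q m m - 2 * Q m n + Q n n" for m n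
    using Qsym[of m n] unfolding pre_norm2_diff Q_def by simp
  have main: "pre_norm2 ?k' (comb_diff (?H m) (?H n)) \<le>
      P m m * (Q m m - 2 * Q m n + Q n n) + (P m m - 2 * P m n + P n n) * Q n n
      + 2 * ((P m m - P m n) * (Q m n - Q n n))" for m n
  proof -
    have "pre_norm2 ?k' (comb_diff (?H m) (?H n)) \<le> pre_norm2 (Kt ?k) (comb_diff (tens (F m) (G m)) (tens (F n) (G n)))"
      unfolding comb_diff_diag by (rule diag_le[OF s])
    also have "\<dots> = P m m * Q m m - P m n * Q m n - P n m * Q n m + P n n * Q n n"
      unfolding pre_norm2_diff B_tens P_def Q_def ..
    also have "\<dots> = P m m * (Q m m - 2 * Q m n + Q n n) + (P m m - 2 * P m n + P n n) * Q n n
      + 2 * ((P m m - P m n) * (Q m n - Q n n))"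
      using Psym[of m n] Qsym[of m n] by (simp add: algebra_simps)
    finally show ?thesis .
  qed
  have u: "(P m m - P m n)\<^sup>2 \<le> P m m * (P m m - 2 * P m n + P n n)" for m n
    using CS[OF psk symk, of "F m" "comb_diff (F m) (F n)"]
    unfolding B_diff2 pre_norm2_B[symmetric] dP P_def by simp
  have v: "(Q m n - Q n n)\<^sup>2 \<le> (Q m m - 2 * Q m n + Q n n) * Q n n" for m n
    using CS[OF psk symk, of "comb_diff (G m) (G n)" "G n"]
    unfolding B_diff1 pre_norm2_B[symmetric] dQ Q_def by simp
  have cauchy: "H0_cauchy ?k' ?H"
    unfolding H0_cauchy_def
  proof (intro allI impI)
    fix e :: real assume e: "e > 0"
    define \<delta> where "\<delta> = e / (4 * M + 1)"
    have d0: "\<delta> > 0" unfolding \<delta>_def using e M0 by simp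
    have de: "4 * M * \<delta> < e" unfolding \<delta>_def using e M0 by (simp add: field_simps)
    obtain N1 where N1: "\<forall>m\<ge>N1. \<forall>n\<ge>N1. pre_norm2 ?k (comb_diff (F m) (F n)) < \<delta>"
      using cF d0 unfolding H0_cauchy_def by blast
    obtain N2 where N2: "\<forall>m\<ge>N2. \<forall>n\<ge>N2. pre_norm2 ?k (comb_diff (G m) (G n)) < \<delta>"
      using cG d0 unfolding H0_cauchy_def by blast
    show "\<exists>N. \<forall>m\<ge>N. \<forall>n\<ge>N. pre_norm2 ?k' (comb_diff (?H m) (?H n)) < e"
    proof (intro exI allI impI)
      fix m n assume mn: "max N1 N2 \<le> m" "max N1 N2 \<le> n"
      have a: "P m m - 2 * P m n + P n n < \<delta>" "Q m m - 2 * Q m n + Q n n < \<delta>"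
        using N1 N2 mn dP dQ by auto
      have b: "0 \<le> P m m - 2 * P m n + P n n" "0 \<le> Q m m - 2 * Q m n + Q n n"
        using psd_pre_norm2[OF psk] dP dQ by metis+
      have "pre_norm2 ?k' (comb_diff (?H m) (?H n)) \<le> 4 * M * \<delta>"
        using main[of m n] E_real[OF Pnn(1)[of m] Pnn(2)[of m] Qnn(1)[of n] Qnn(2)[of n] b(1) _ b(2) _ u v]
          a by (smt (verit))
      then show "pre_norm2 ?k' (comb_diff (?H m) (?H n)) < e" using de by simp
    qed
  qed
  obtain L where L: "(\<lambda>n. sqrt (pre_norm2 ?k' (?H n))) \<longlonglongrightarrow> L"
    using norm_conv[OF psk' symk' cauchy] by blast
  have "(\<lambda>n. sqrt (pre_norm2 ?k (F n)) * sqrt (pre_norm2 ?k (G n))) \<longlonglongrightarrow> Lf * Lg"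
    by (intro tendsto_mult lF lG)
  moreover have "sqrt (pre_norm2 ?k' (?H n)) \<le> sqrt (pre_norm2 ?k (F n)) * sqrt (pre_norm2 ?k (G n))" for n
  proof -
    have "pre_norm2 ?k' (?H n) \<le> pre_norm2 (Kt ?k) (tens (F n) (G n))" by (rule diag_le[OF s])
    also have "\<dots> = pre_norm2 ?k (F n) * pre_norm2 ?k (G n)" by (simp add: pre_norm2_B B_tens)
    finally show ?thesis by (metis real_sqrt_le_mono real_sqrt_mult)
  qed
  ultimately have "L \<le> Lf * Lg" using L by (intro LIMSEQ_le) auto
  then show ?thesis using cauchy L by blast
qed



lemma inf_prod:
  fixes S T :: "real set"
  assumes "S \<noteq> {}" "T \<noteq> {}" "\<And>x. x \<in> S \<Longrightarrow> 0 \<le> x" "\<And>y. y \<in> T \<Longrightarrow> 0 \<le> y"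
    "\<And>x y. x \<in> S \<Longrightarrow> y \<in> T \<Longrightarrow> R \<le> x * y"
  shows "R \<le> Inf S * Inf T"
proof -
  have If: "0 \<le> Inf S" using assms by (intro cInf_greatest) auto
  have 1: "R \<le> Inf S * y" if y: "y \<in> T" for y
  proof (cases "y > 0")
    case True
    have "R / y \<le> Inf S"
      using assms(1) by (rule cInf_greatest) (use assms(5)[OF _ y] True in \<open>simp add: divide_le_eq\<close>)
    then show ?thesis using True by (simp add: divide_le_eq mult.commute)
  next
    case False
    then have "y = 0" using assms(4)[OF y] by simp
    obtain x where "x \<in> S" using assms(1) by blast
    then show ?thesis using assms(5)[OF _ y] \<open>y = 0\<close> by fastforce
  qed
  show ?thesis
  proof (cases "Inf S > 0")
    case True
    have "R / Inf S \<le> Inf T"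
      using assms(2) by (rule cInf_greatest) (use 1 True in \<open>simp add: divide_le_eq mult.commute\<close>)
    then show ?thesis using True by (simp add: divide_le_eq mult.commute)
  next
    case False
    then have "Inf S = 0" using If by simp
    obtain y where "y \<in> T" using assms(2) by blast
    then show ?thesis using 1 \<open>Inf S = 0\<close> by fastforce
  qed
qed

theorem theorem2:
  fixes \<sigma> :: real and f g :: "real^'d \<Rightarrow> real"
  assumes "\<sigma> > 0"
    and "in_rkhs (gauss_kernel \<sigma>) f" and "in_rkhs (gauss_kernel \<sigma>) g"
  shows "in_rkhs (gauss_kernel (\<sigma> / sqrt 2)) (\<lambda>x. f x * g x)
    \<and> rkhs_norm (gauss_kernel (\<sigma> / sqrt 2)) (\<lambda>x. f x * g x)
        \<le> rkhs_norm (gauss_kernel \<sigma>) f * rkhs_norm (gauss_kernel \<sigma>) g"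
proof -
  let ?k = "gauss_kernel \<sigma>" and ?k' = "gauss_kernel (\<sigma> / sqrt 2)"
  have psk: "psd ?k" by (rule psd_gauss[OF assms(1)])
  have psk': "psd ?k'" by (rule psd_gauss) (use assms(1) in simp)
  define S where "S K h = {L. \<exists>F. H0_cauchy K F \<and> (\<forall>z. (\<lambda>n. kfun K (F n) z) \<longlonglongrightarrow> h z)
                              \<and> (\<lambda>n. sqrt (pre_norm2 K (F n))) \<longlonglongrightarrow> L}" for K and h :: "real^'d \<Rightarrow> real"
  have norm_eq: "rkhs_norm K h = Inf (S K h)" for K h unfolding rkhs_norm_def S_def ..
  have nonneg: "0 \<le> L" if LS: "L \<in> S K h" and PK: "psd K" for K h L
  proof -
    obtain F where "(\<lambda>n. sqrt (pre_norm2 K (F n))) \<longlonglongrightarrow> L" using LS unfolding S_def by blast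
    then show ?thesis by (rule LIMSEQ_le_const) (use psd_pre_norm2[OF PK] in auto)
  qed
  have ne: "S ?k h \<noteq> {}" if IR: "in_rkhs ?k h" for h
  proof -
    obtain F where F: "H0_cauchy ?k F" "\<forall>z. (\<lambda>n. kfun ?k (F n) z) \<longlonglongrightarrow> h z"
      using IR unfolding in_rkhs_def by blast
    obtain L where "(\<lambda>n. sqrt (pre_norm2 ?k (F n))) \<longlonglongrightarrow> L"
      using norm_conv[OF psk gauss_sym F(1)] by blast
    then show ?thesis using F unfolding S_def by blast
  qed
  have prodS: "\<exists>L \<in> S ?k' (\<lambda>x. f x * g x). L \<le> Lf * Lg" if LF: "Lf \<in> S ?k f" and LG: "Lg \<in> S ?k g" for Lf Lg
  proof -
    obtain F where F: "H0_cauchy ?k F" "\<forall>z. (\<lambda>n. kfun ?k (F n) z) \<longlonglongrightarrow> f z"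
        "(\<lambda>n. sqrt (pre_norm2 ?k (F n))) \<longlonglongrightarrow> Lf" using LF unfolding S_def by blast
    obtain G where G: "H0_cauchy ?k G" "\<forall>z. (\<lambda>n. kfun ?k (G n) z) \<longlonglongrightarrow> g z"
        "(\<lambda>n. sqrt (pre_norm2 ?k (G n))) \<longlonglongrightarrow> Lg" using LG unfolding S_def by blast
    obtain L where L: "H0_cauchy ?k' (\<lambda>n. diag \<sigma> (tens (F n) (G n)))"
      "(\<lambda>n. sqrt (pre_norm2 ?k' (diag \<sigma> (tens (F n) (G n))))) \<longlonglongrightarrow> L" "L \<le> Lf * Lg"
      using prod_seq[OF assms(1) F(1) G(1) F(3) G(3)] by blast
    have "\<forall>z. (\<lambda>n. kfun ?k' (diag \<sigma> (tens (F n) (G n))) z) \<longlonglongrightarrow> f z * g z"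
      unfolding kfun_diag[OF assms(1)] using F(2) G(2) by (auto intro: tendsto_mult)
    then have "L \<in> S ?k' (\<lambda>x. f x * g x)" using L unfolding S_def by blast
    then show ?thesis using L(3) by blast
  qed
  obtain Lf where "Lf \<in> S ?k f" using ne[OF assms(2)] by blast
  obtain Lg where "Lg \<in> S ?k g" using ne[OF assms(3)] by blast
  obtain L where L: "L \<in> S ?k' (\<lambda>x. f x * g x)" using prodS[OF \<open>Lf \<in> _\<close> \<open>Lg \<in> _\<close>] by blast
  have part1: "in_rkhs ?k' (\<lambda>x. f x * g x)" using L unfolding S_def in_rkhs_def by blast
  have bdd: "bdd_below (S ?k' (\<lambda>x. f x * g x))"
    using nonneg[OF _ psk'] unfolding bdd_below_def by blast
  have "Inf (S ?k' (\<lambda>x. f x * g x)) \<le> Inf (S ?k f) * Inf (S ?k g)"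
  proof (rule inf_prod)
    show "S ?k f \<noteq> {}" "S ?k g \<noteq> {}" using ne assms(2,3) by auto
    show "\<And>x. x \<in> S ?k f \<Longrightarrow> 0 \<le> x" "\<And>y. y \<in> S ?k g \<Longrightarrow> 0 \<le> y" using nonneg psk by auto
    fix x y assume "x \<in> S ?k f" "y \<in> S ?k g"
    then obtain L' where "L' \<in> S ?k' (\<lambda>x. f x * g x)" "L' \<le> x * y" using prodS by blast
    then show "Inf (S ?k' (\<lambda>x. f x * g x)) \<le> x * y"
      using cInf_lower[OF _ bdd] by (meson order_trans)
  qed
  then show ?thesis using part1 unfolding norm_eq by simp
qed

end
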